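(* Let $G=(V,E)$ be a directed acyclic graph with real edge weights, let $s_1,t_1,s_2,t_2\in V$, and let $E_\cap=E(s_1,t_1)\cap E(s_2,t_2)$. Let $(P_1,P_2)\in\Pi(s_1,t_1)\times\Pi(s_2,t_2)$ and let $x,y\in V$ be such that $x$ precedes $y$ on both $P_1$ and $P_2$. Then all edges of the subpaths $P_1[x,y]$ and $P_2[x,y]$ belong to $E_\cap$.
   Context: $\Pi(x,y)$ is the set of shortest (minimum weight) paths from $x$ to $y$; $E(x,y)$ is the set of edges lying on at least one path in $\Pi(x,y)$. For a path $P$, $x$ precedes $y$ on $P$ if $x=y$ or $x$ appears before $y$; $P[x,y]$ is the subpath from $x$ to $y$. *)

theory Defs
  imports Complex_Main
begin

definition path_edges :: "'a list \<Rightarrow> ('a \<times> 'a) list" where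
  "path_edges p = zip p (tl p)"

definition is_path :: "('a \<times> 'a) set \<Rightarrow> 'a list \<Rightarrow> 'a \<Rightarrow> 'a \<Rightarrow> bool" where
  "is_path E p x y \<longleftrightarrow> p \<noteq> [] \<and> hd p = x \<and> last p = y \<and> set (path_edges p) \<subseteq> E"

definition path_weight :: "('a \<Rightarrow> 'a \<Rightarrow> real) \<Rightarrow> 'a list \<Rightarrow> real" where
  "path_weight w p = sum_list (map (\<lambda>(u,v). w u v) (path_edges p))"

definition shortest_paths :: "('a \<times> 'a) set \<Rightarrow> ('a \<Rightarrow> 'a \<Rightarrow> real) \<Rightarrow> 'a \<Rightarrow> 'a \<Rightarrow> 'a list set" where
  "shortest_paths E w x y =
     {p. is_path E p x y \<and> (\<forall>q. is_path E q x y \<longrightarrow> path_weight w p \<le> path_weight w q)}"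

definition sp_edges :: "('a \<times> 'a) set \<Rightarrow> ('a \<Rightarrow> 'a \<Rightarrow> real) \<Rightarrow> 'a \<Rightarrow> 'a \<Rightarrow> ('a \<times> 'a) set" where
  "sp_edges E w x y = (\<Union>p \<in> shortest_paths E w x y. set (path_edges p))"

definition precedes :: "'a list \<Rightarrow> 'a \<Rightarrow> 'a \<Rightarrow> bool" where
  "precedes P x y \<longleftrightarrow> (\<exists>i j. i \<le> j \<and> j < length P \<and> P ! i = x \<and> P ! j = y)"

text \<open>P[x,y]: the subpath of P from (the first occurrence of) x to (the last occurrence of) y.
  On a DAG paths are simple, so this is the unique subpath.\<close>
definition subpath :: "'a list \<Rightarrow> 'a \<Rightarrow> 'a \<Rightarrow> 'a list" where
  "subpath P x y =
     (let i = LEAST i. i < length P \<and> P ! i = x;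
          j = GREATEST j. j < length P \<and> P ! j = y
      in take (j + 1 - i) (drop i P))"

end

theory Submission
  imports Defs
begin

lemma pe_nil[simp]: "path_edges [] = []" and pe_one[simp]: "path_edges [a] = []"
  and pe_cons2[simp]: "path_edges (a # b # r) = (a, b) # path_edges (b # r)"
  by (auto simp: path_edges_def)

lemma pe_split: "path_edges (xs @ y # ys) = path_edges (xs @ [y]) @ path_edges (y # ys)"
proof (induction xs)
  case Nil then show ?case by simp
next
  case (Cons a xs) then show ?case by (cases xs) auto
qed

lemma pw_split: "path_weight w (xs @ y # ys) = path_weight w (xs @ [y]) + path_weight w (y # ys)"
  unfolding path_weight_def by (subst pe_split) simp

lemma pw3: assumes "S \<noteq> []"
  shows "path_weight w (A @ S @ B) = path_weight w (A @ [hd S]) + path_weight w S + path_weight w (last S # B)"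
proof -
  have 1: "A @ S @ B = A @ hd S # (tl S @ B)" using assms by simp
  have 2: "hd S # (tl S @ B) = butlast S @ last S # B"
  proof -
    have "hd S # (tl S @ B) = S @ B" using assms by simp
    also have "\<dots> = (butlast S @ [last S]) @ B" using assms by simp
    also have "\<dots> = butlast S @ last S # B" by simp
    finally show ?thesis .
  qed
  have 3: "butlast S @ [last S] = S" using assms by simp
  have "path_weight w (A @ S @ B) = path_weight w (A @ hd S # (tl S @ B))" by (rule arg_cong[OF 1])
  also have "\<dots> = path_weight w (A @ [hd S]) + path_weight w (hd S # (tl S @ B))" by (rule pw_split)
  also have "\<dots> = path_weight w (A @ [hd S]) + path_weight w (butlast S @ last S # B)" by (simp only: 2)
  also have "\<dots> = path_weight w (A @ [hd S]) + (path_weight w (butlast S @ [last S]) + path_weight w (last S # B))"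
    by (simp only: pw_split[of w "butlast S" "last S" B])
  finally show ?thesis by (simp only: 3 add.assoc)
qed

lemma pe3: assumes "S \<noteq> []"
  shows "set (path_edges (A @ S @ B)) = set (path_edges (A @ [hd S])) \<union> set (path_edges S) \<union> set (path_edges (last S # B))"
proof -
  have 1: "A @ S @ B = A @ hd S # (tl S @ B)" using assms by simp
  have 2: "hd S # (tl S @ B) = butlast S @ last S # B"
  proof -
    have "hd S # (tl S @ B) = S @ B" using assms by simp
    also have "\<dots> = (butlast S @ [last S]) @ B" using assms by simp
    also have "\<dots> = butlast S @ last S # B" by simp
    finally show ?thesis .
  qed
  have 3: "butlast S @ [last S] = S" using assms by simp
  have "path_edges (A @ S @ B) = path_edges (A @ hd S # (tl S @ B))" by (rule arg_cong[OF 1])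
  also have "\<dots> = path_edges (A @ [hd S]) @ path_edges (hd S # (tl S @ B))" by (rule pe_split)
  also have "\<dots> = path_edges (A @ [hd S]) @ path_edges (butlast S @ last S # B)" by (simp only: 2)
  also have "\<dots> = path_edges (A @ [hd S]) @ (path_edges (butlast S @ [last S]) @ path_edges (last S # B))"
    by (simp only: pe_split[of "butlast S" "last S" B])
  finally show ?thesis by (simp only: 3 set_append Un_assoc)
qed

lemma hd3: "S \<noteq> [] \<Longrightarrow> T \<noteq> [] \<Longrightarrow> hd S = hd T \<Longrightarrow> hd (A @ S @ B) = hd (A @ T @ B)"
  by (cases A) auto

lemma last3: "S \<noteq> [] \<Longrightarrow> T \<noteq> [] \<Longrightarrow> last S = last T \<Longrightarrow> last (A @ S @ B) = last (A @ T @ B)"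
  by (cases B rule: rev_cases) auto

lemma swap_path:
  assumes "is_path E (A @ S @ B) s t" "S \<noteq> []" "T \<noteq> []" "hd T = hd S" "last T = last S"
    "set (path_edges T) \<subseteq> E"
  shows "is_path E (A @ T @ B) s t"
proof -
  have p: "A @ S @ B \<noteq> []" "hd (A @ S @ B) = s" "last (A @ S @ B) = t"
    "set (path_edges (A @ S @ B)) \<subseteq> E" using assms(1) unfolding is_path_def by blast+
  have e: "set (path_edges (A @ T @ B)) = set (path_edges (A @ [hd S])) \<union> set (path_edges T) \<union> set (path_edges (last S # B))"
    using pe3[of T A B] assms(3,4,5) by simp
  have "set (path_edges (A @ [hd S])) \<union> set (path_edges (last S # B)) \<subseteq> E"
    using p(4) pe3[of S A B] assms(2) by blast
  then have "set (path_edges (A @ T @ B)) \<subseteq> E" using e assms(6) by blast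
  moreover have "hd (A @ T @ B) = s" using hd3[of S T A B] assms p by simp
  moreover have "last (A @ T @ B) = t" using last3[of S T A B] assms p by simp
  moreover have "A @ T @ B \<noteq> []" using assms(3) by simp
  ultimately show ?thesis unfolding is_path_def by blast
qed

lemma opt_sub:
  assumes "A @ S @ B \<in> shortest_paths E w s t" "S \<noteq> []" "is_path E T (hd S) (last S)"
  shows "path_weight w S \<le> path_weight w T"
proof -
  have T: "T \<noteq> []" "hd T = hd S" "last T = last S" "set (path_edges T) \<subseteq> E"
    using assms(3) unfolding is_path_def by blast+
  have P: "is_path E (A @ S @ B) s t"
    and M: "\<And>q. is_path E q s t \<Longrightarrow> path_weight w (A @ S @ B) \<le> path_weight w q"
    using assms(1) unfolding shortest_paths_def by blast+
  have "is_path E (A @ T @ B) s t" by (rule swap_path[OF P assms(2) T])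
  then have "path_weight w (A @ S @ B) \<le> path_weight w (A @ T @ B)" by (rule M)
  moreover have "path_weight w (A @ S @ B) = path_weight w (A @ [hd S]) + path_weight w S + path_weight w (last S # B)"
    by (rule pw3[OF assms(2)])
  moreover have "path_weight w (A @ T @ B) = path_weight w (A @ [hd S]) + path_weight w T + path_weight w (last S # B)"
    using pw3[OF T(1), of w A B] unfolding T(2,3) .
  ultimately show ?thesis by linarith
qed

lemma swap_sp:
  assumes "A @ S @ B \<in> shortest_paths E w s t" "S \<noteq> []" "T \<noteq> []" "hd T = hd S" "last T = last S"
    "set (path_edges T) \<subseteq> E" "path_weight w T = path_weight w S"
  shows "set (path_edges T) \<subseteq> sp_edges E w s t"
proof -
  have P: "is_path E (A @ S @ B) s t"
    and M: "\<And>q. is_path E q s t \<Longrightarrow> path_weight w (A @ S @ B) \<le> path_weight w q"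
    using assms(1) unfolding shortest_paths_def by blast+
  have p: "is_path E (A @ T @ B) s t" by (rule swap_path[OF P assms(2-6)])
  have "path_weight w (A @ S @ B) = path_weight w (A @ [hd S]) + path_weight w S + path_weight w (last S # B)"
    by (rule pw3[OF assms(2)])
  moreover have "path_weight w (A @ T @ B) = path_weight w (A @ [hd S]) + path_weight w T + path_weight w (last S # B)"
    using pw3[OF assms(3), of w A B] unfolding assms(4,5) .
  ultimately have "path_weight w (A @ T @ B) = path_weight w (A @ S @ B)" using assms(7) by linarith
  then have "A @ T @ B \<in> shortest_paths E w s t" using p M unfolding shortest_paths_def by simp
  moreover have "set (path_edges T) \<subseteq> set (path_edges (A @ T @ B))" using pe3[OF assms(3), of A B] by blast
  ultimately show ?thesis unfolding sp_edges_def by blast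
qed

lemma subpath_decomp:
  assumes "precedes P x y"
  shows "\<exists>A B. P = A @ subpath P x y @ B \<and> subpath P x y \<noteq> [] \<and> hd (subpath P x y) = x \<and> last (subpath P x y) = y"
proof -
  obtain i j where ij: "i \<le> j" "j < length P" "P ! i = x" "P ! j = y"
    using assms unfolding precedes_def by blast
  define i0 where "i0 = (LEAST i. i < length P \<and> P ! i = x)"
  define j0 where "j0 = (GREATEST j. j < length P \<and> P ! j = y)"
  have i0: "i0 < length P" "P ! i0 = x" "i0 \<le> i"
    using LeastI[of "\<lambda>i. i < length P \<and> P ! i = x" i] Least_le[of "\<lambda>i. i < length P \<and> P ! i = x" i] ij
    unfolding i0_def by auto
  have bnd: "\<forall>j. j < length P \<and> P ! j = y \<longrightarrow> j \<le> length P" by auto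
  have j0: "j0 < length P" "P ! j0 = y" "j \<le> j0"
    using GreatestI_nat[of "\<lambda>j. j < length P \<and> P ! j = y" j "length P"]
      Greatest_le_nat[of "\<lambda>j. j < length P \<and> P ! j = y" j "length P"] ij
    unfolding j0_def by auto
  have S: "subpath P x y = take (j0 + 1 - i0) (drop i0 P)"
    unfolding subpath_def i0_def j0_def Let_def by simp
  have le: "i0 \<le> j0" using i0 j0 ij by simp
  have dec: "P = take i0 P @ take (j0 + 1 - i0) (drop i0 P) @ drop (j0 + 1) P"
  proof -
    have "take (j0 + 1 - i0) (drop i0 P) @ drop (j0 + 1) P = drop i0 P"
    proof -
      have "drop (j0 + 1 - i0) (drop i0 P) = drop (j0 + 1) P" using le by (simp add: drop_drop)
      then show ?thesis by (metis append_take_drop_id)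
    qed
    then show ?thesis by simp
  qed
  have ne: "take (j0 + 1 - i0) (drop i0 P) \<noteq> []" using le j0 by simp
  have hd: "hd (take (j0 + 1 - i0) (drop i0 P)) = x" using le i0 j0
    by (simp add: hd_drop_conv_nth)
  have lst: "last (take (j0 + 1 - i0) (drop i0 P)) = y" using le i0 j0 ne
    by (simp add: last_conv_nth)
  show ?thesis unfolding S using dec ne hd lst by blast
qed

theorem lemma17:
  fixes V :: "'a set" and E :: "('a \<times> 'a) set" and w :: "'a \<Rightarrow> 'a \<Rightarrow> real"
    and s1 t1 s2 t2 x y :: 'a and P1 P2 :: "'a list"
  assumes "finite V" and "E \<subseteq> V \<times> V" and "acyclic E"
    and "s1 \<in> V" "t1 \<in> V" "s2 \<in> V" "t2 \<in> V"
    and "P1 \<in> shortest_paths E w s1 t1" and "P2 \<in> shortest_paths E w s2 t2"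
    and "precedes P1 x y" and "precedes P2 x y"
  shows "set (path_edges (subpath P1 x y)) \<union> set (path_edges (subpath P2 x y)) \<subseteq> sp_edges E w s1 t1 \<inter> sp_edges E w s2 t2"
proof -
  define S1 where "S1 = subpath P1 x y"
  define S2 where "S2 = subpath P2 x y"
  obtain A1 B1 where d1: "P1 = A1 @ S1 @ B1" "S1 \<noteq> []" "hd S1 = x" "last S1 = y"
    using subpath_decomp[OF assms(10)] unfolding S1_def by blast
  obtain A2 B2 where d2: "P2 = A2 @ S2 @ B2" "S2 \<noteq> []" "hd S2 = x" "last S2 = y"
    using subpath_decomp[OF assms(11)] unfolding S2_def by blast
  have P1: "A1 @ S1 @ B1 \<in> shortest_paths E w s1 t1" using assms(8) d1 by simp
  have P2: "A2 @ S2 @ B2 \<in> shortest_paths E w s2 t2" using assms(9) d2 by simp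
  have e1: "set (path_edges S1) \<subseteq> E"
    using P1 pe3[of S1 A1 B1] d1 by (auto simp: shortest_paths_def is_path_def)
  have e2: "set (path_edges S2) \<subseteq> E"
    using P2 pe3[of S2 A2 B2] d2 by (auto simp: shortest_paths_def is_path_def)
  have ip1: "is_path E S1 x y" using d1 e1 by (simp add: is_path_def)
  have ip2: "is_path E S2 x y" using d2 e2 by (simp add: is_path_def)
  have "path_weight w S1 \<le> path_weight w S2" using opt_sub[OF P1 d1(2)] ip2 d1 by simp
  moreover have "path_weight w S2 \<le> path_weight w S1" using opt_sub[OF P2 d2(2)] ip1 d2 by simp
  ultimately have eq: "path_weight w S1 = path_weight w S2" by simp
  have a: "set (path_edges S1) \<subseteq> sp_edges E w s1 t1"
    using swap_sp[OF P1 d1(2) d1(2)] e1 by simp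
  have b: "set (path_edges S2) \<subseteq> sp_edges E w s2 t2"
    using swap_sp[OF P2 d2(2) d2(2)] e2 by simp
  have c: "set (path_edges S2) \<subseteq> sp_edges E w s1 t1"
    using swap_sp[OF P1 d1(2) d2(2)] e2 eq d1 d2 by simp
  have d: "set (path_edges S1) \<subseteq> sp_edges E w s2 t2"
    using swap_sp[OF P2 d2(2) d1(2)] e1 eq d1 d2 by simp
  show ?thesis using a b c d unfolding S1_def S2_def by blast
qed

end
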